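(* Let $\eta\colon\mathcal{D}\to\mathcal{D}$ be a polynomial $\tau$-equivariant map, i.e. of the form $\eta(\lambda_1,\lambda_2)=(\Psi(\lambda_1,\lambda_2),\Psi(\lambda_2,\lambda_1))$ with $\Psi$ polynomial. Then $\eta$ extends to a polynomial map $\Phi\colon\mathcal{M}(2;\mathbb{C})\to\mathcal{M}(2;\mathbb{C})$ compatible with conjugation (i.e. $\Phi_{|\mathcal{D}}=\eta$).
   Context: $\mathcal{D}$ is the set of diagonal $2\times2$ complex matrices, identified with $\mathbb{C}^2$ via $\mathrm{diag}(\lambda_1,\lambda_2)\mapsto(\lambda_1,\lambda_2)$; $\tau(\lambda_1,\lambda_2)=(\lambda_2,\lambda_1)$. A map $\Phi$ is compatible with conjugation if $\mathrm{A}\Phi(\mathrm{M})\mathrm{A}^{-1}=\Phi(\mathrm{A}\mathrm{M}\mathrm{A}^{-1})$ for all $\mathrm{A}\in\mathrm{GL}(2;\mathbb{C})$ and all $\mathrm{M}$ where defined. *)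

theory Defs
  imports "HOL-Analysis.Analysis"
begin

definition poly2 :: "(complex \<Rightarrow> complex \<Rightarrow> complex) \<Rightarrow> bool" where
  "poly2 f \<longleftrightarrow> (\<exists>S :: (nat \<times> nat) set. \<exists>c :: nat \<times> nat \<Rightarrow> complex. finite S \<and>
     (\<forall>x y. f x y = (\<Sum>(i, j)\<in>S. c (i, j) * x ^ i * y ^ j)))"

definition poly4 :: "(complex \<Rightarrow> complex \<Rightarrow> complex \<Rightarrow> complex \<Rightarrow> complex) \<Rightarrow> bool" where
  "poly4 f \<longleftrightarrow> (\<exists>S :: (nat \<times> nat \<times> nat \<times> nat) set.
     \<exists>c :: nat \<times> nat \<times> nat \<times> nat \<Rightarrow> complex. finite S \<and>
     (\<forall>a b d e. f a b d e = (\<Sum>(i, j, k, l)\<in>S. c (i, j, k, l) * a ^ i * b ^ j * d ^ k * e ^ l)))"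

definition poly_matrix_map :: "(complex^2^2 \<Rightarrow> complex^2^2) \<Rightarrow> bool" where
  "poly_matrix_map \<Phi> \<longleftrightarrow> (\<forall>r s. poly4 (\<lambda>a b d e.
      \<Phi> (\<chi> i j. if i = 1 then (if j = 1 then a else b) else (if j = 1 then d else e)) $ r $ s))"

definition compatible_conj :: "(complex^2^2 \<Rightarrow> complex^2^2) \<Rightarrow> bool" where
  "compatible_conj \<Phi> \<longleftrightarrow> (\<forall>A M. invertible A \<longrightarrow>
      A ** \<Phi> M ** matrix_inv A = \<Phi> (A ** M ** matrix_inv A))"

definition diag2 :: "complex \<Rightarrow> complex \<Rightarrow> complex^2^2" where
  "diag2 l1 l2 = (\<chi> i j. if i = j then (if i = 1 then l1 else l2) else 0)"

end

theory Submission
  imports Defs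
begin

definition mon4 :: "nat \<times> nat \<times> nat \<times> nat \<Rightarrow> complex \<Rightarrow> complex \<Rightarrow> complex \<Rightarrow> complex \<Rightarrow> complex" where
  "mon4 p a b d e = (case p of (i,j,k,l) \<Rightarrow> a^i*b^j*d^k*e^l)"

lemma poly4_alt: "poly4 f \<longleftrightarrow> (\<exists>S c. finite S \<and> (\<forall>a b d e. f a b d e = (\<Sum>p\<in>S. c p * mon4 p a b d e)))"
proof -
  have "\<And>c a b d e S. (\<Sum>(i, j, k, l)\<in>S. c (i, j, k, l) * a ^ i * b ^ j * d ^ k * e ^ l)
     = (\<Sum>p\<in>S. c p * mon4 p a b d e)"
    by (rule sum.cong) (auto simp: mon4_def mult.assoc split: prod.splits)
  then show ?thesis unfolding poly4_def by simp
qed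

lemma poly4_gen:
  assumes "finite I" "\<And>a b d e. f a b d e = (\<Sum>n\<in>I. c n * mon4 (q n) a b d e)"
  shows "poly4 f"
  unfolding poly4_alt
proof (intro exI conjI allI)
  show "finite (q ` I)" using assms(1) by simp
  fix a b d e
  have "f a b d e = (\<Sum>y\<in>q ` I. \<Sum>n\<in>{x \<in> I. q x = y}. c n * mon4 (q n) a b d e)"
    using assms by (simp add: sum.image_gen[OF assms(1), of _ q])
  also have "\<dots> = (\<Sum>y\<in>q ` I. (\<Sum>n\<in>{x \<in> I. q x = y}. c n) * mon4 y a b d e)"
    by (rule sum.cong) (auto simp: sum_distrib_right)
  finally show "f a b d e = (\<Sum>y\<in>q ` I. (\<Sum>n\<in>{x \<in> I. q x = y}. c n) * mon4 y a b d e)" .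
qed

lemma poly4_add:
  assumes "poly4 f" "poly4 g" shows "poly4 (\<lambda>a b d e. f a b d e + g a b d e)"
proof -
  obtain S c where S: "finite S" "\<And>a b d e. f a b d e = (\<Sum>p\<in>S. c p * mon4 p a b d e)"
    using assms(1) unfolding poly4_alt by blast
  obtain T c' where T: "finite T" "\<And>a b d e. g a b d e = (\<Sum>p\<in>T. c' p * mon4 p a b d e)"
    using assms(2) unfolding poly4_alt by blast
  show ?thesis
    apply (rule poly4_gen[where I="S <+> T" and c="case_sum c c'" and q="case_sum id id"])
    using S T by (auto simp: sum.Plus o_def)
qed

lemma mon4_mult: "mon4 p a b d e * mon4 p' a b d e = mon4 (case p of (i,j,k,l) \<Rightarrow> case p' of (i',j',k',l') \<Rightarrow> (i+i',j+j',k+k',l+l')) a b d e"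
  by (auto simp: mon4_def power_add split: prod.splits)

lemma poly4_mult:
  assumes "poly4 f" "poly4 g" shows "poly4 (\<lambda>a b d e. f a b d e * g a b d e)"
proof -
  obtain S c where S: "finite S" "\<And>a b d e. f a b d e = (\<Sum>p\<in>S. c p * mon4 p a b d e)"
    using assms(1) unfolding poly4_alt by blast
  obtain T c' where T: "finite T" "\<And>a b d e. g a b d e = (\<Sum>p\<in>T. c' p * mon4 p a b d e)"
    using assms(2) unfolding poly4_alt by blast
  show ?thesis
  proof (rule poly4_gen[where I="S \<times> T" and c="\<lambda>(p,p'). c p * c' p'"
      and q="\<lambda>(p,p'). case p of (i,j,k,l) \<Rightarrow> case p' of (i',j',k',l') \<Rightarrow> (i+i',j+j',k+k',l+l')"])
    show "finite (S \<times> T)" using S T by simp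
    fix a b d e
    have "f a b d e * g a b d e = (\<Sum>p\<in>S. \<Sum>p'\<in>T. (c p * mon4 p a b d e) * (c' p' * mon4 p' a b d e))"
      using S T by (simp add: sum_product)
    also have "\<dots> = (\<Sum>(p,p')\<in>S \<times> T. (c p * mon4 p a b d e) * (c' p' * mon4 p' a b d e))"
      by (simp add: sum.cartesian_product)
    finally show "f a b d e * g a b d e = (\<Sum>n\<in>S \<times> T. (case n of (p, p') \<Rightarrow> c p * c' p') *
          mon4 (case n of (p, p') \<Rightarrow> case p of (i, j, k, l) \<Rightarrow> case p' of (i', j', k', l') \<Rightarrow> (i + i', j + j', k + k', l + l')) a b d e)"
      by (simp only:) (rule sum.cong[OF refl], auto simp: mon4_def power_add mult_ac split: prod.splits)
  qed
qed

lemma poly4_const: "poly4 (\<lambda>a b d e. k)"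
  by (rule poly4_gen[where I="{()}" and c="\<lambda>_. k" and q="\<lambda>_. (0,0,0,0)"]) (auto simp: mon4_def)

lemma poly4_neg: assumes "poly4 f" shows "poly4 (\<lambda>a b d e. - f a b d e)"
  using poly4_mult[OF poly4_const[of "-1"] assms] by simp

lemma poly4_sub: assumes "poly4 f" "poly4 g" shows "poly4 (\<lambda>a b d e. f a b d e - g a b d e)"
  using poly4_add[OF assms(1) poly4_neg[OF assms(2)]] by simp

lemma poly4_sum: "finite I \<Longrightarrow> (\<And>n. n \<in> I \<Longrightarrow> poly4 (f n)) \<Longrightarrow> poly4 (\<lambda>a b d e. \<Sum>n\<in>I. f n a b d e)"
proof (induction I rule: finite_induct)
  case empty then show ?case using poly4_const[of 0] by simp
next
  case (insert x F) then show ?case using poly4_add[of "f x" "\<lambda>a b d e. \<Sum>n\<in>F. f n a b d e"] by simp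
qed

lemma poly4_a: "poly4 (\<lambda>a b d e. a)"
  by (rule poly4_gen[where I="{()}" and c="\<lambda>_. 1" and q="\<lambda>_. (1,0,0,0)"]) (auto simp: mon4_def)
lemma poly4_b: "poly4 (\<lambda>a b d e. b)"
  by (rule poly4_gen[where I="{()}" and c="\<lambda>_. 1" and q="\<lambda>_. (0,1,0,0)"]) (auto simp: mon4_def)
lemma poly4_d: "poly4 (\<lambda>a b d e. d)"
  by (rule poly4_gen[where I="{()}" and c="\<lambda>_. 1" and q="\<lambda>_. (0,0,1,0)"]) (auto simp: mon4_def)
lemma poly4_e: "poly4 (\<lambda>a b d e. e)"
  by (rule poly4_gen[where I="{()}" and c="\<lambda>_. 1" and q="\<lambda>_. (0,0,0,1)"]) (auto simp: mon4_def)

definition mk :: "complex \<Rightarrow> complex \<Rightarrow> complex \<Rightarrow> complex \<Rightarrow> complex^2^2" where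
  "mk a b d e = (\<chi> i j. if i = 1 then (if j = 1 then a else b) else (if j = 1 then d else e))"

definition PM :: "(complex \<Rightarrow> complex \<Rightarrow> complex \<Rightarrow> complex \<Rightarrow> complex^2^2) \<Rightarrow> bool" where
  "PM F \<longleftrightarrow> (\<forall>r s. poly4 (\<lambda>a b d e. F a b d e $ r $ s))"

lemma PM_mk: "PM mk"
  unfolding PM_def mk_def
  apply (intro allI)
  subgoal for r s by (cases "r = 1"; cases "s = 1") (simp_all add: poly4_a poly4_b poly4_d poly4_e)
  done

lemma PM_mult: "PM F \<Longrightarrow> PM G \<Longrightarrow> PM (\<lambda>a b d e. F a b d e ** G a b d e)"
  unfolding PM_def matrix_matrix_mult_def
  by (auto intro!: poly4_sum poly4_mult)

lemma PM_sub: "PM F \<Longrightarrow> PM G \<Longrightarrow> PM (\<lambda>a b d e. F a b d e - G a b d e)"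
  unfolding PM_def by (auto intro!: poly4_sub)

lemma PM_const: "PM (\<lambda>a b d e. X)"
  unfolding PM_def by (auto intro!: poly4_const)

definition smul :: "complex \<Rightarrow> complex^2^2 \<Rightarrow> complex^2^2" where
  "smul k X = (\<chi> i j. k * X $ i $ j)"

lemma PM_smul: "poly4 f \<Longrightarrow> PM F \<Longrightarrow> PM (\<lambda>a b d e. smul (f a b d e) (F a b d e))"
  unfolding PM_def smul_def by (auto intro!: poly4_mult)

lemma PM_sum: "finite S \<Longrightarrow> (\<And>p. p \<in> S \<Longrightarrow> PM (F p)) \<Longrightarrow> PM (\<lambda>a b d e. \<Sum>p\<in>S. F p a b d e)"
  unfolding PM_def by (auto simp: sum_component intro!: poly4_sum)

lemma poly4_trace: "PM F \<Longrightarrow> poly4 (\<lambda>a b d e. trace (F a b d e))"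
  unfolding PM_def trace_def by (auto intro!: poly4_sum)

fun mpow :: "complex^2^2 \<Rightarrow> nat \<Rightarrow> complex^2^2" where
  "mpow M 0 = mat 1"
| "mpow M (Suc n) = M ** mpow M n"

definition adj2 :: "complex^2^2 \<Rightarrow> complex^2^2" where
  "adj2 M = smul (trace M) (mat 1) - M"

lemma PM_mpow: "PM F \<Longrightarrow> PM (\<lambda>a b d e. mpow (F a b d e) n)"
  by (induction n) (auto intro: PM_const PM_mult)

lemma PM_adj2: "PM F \<Longrightarrow> PM (\<lambda>a b d e. adj2 (F a b d e))"
  unfolding adj2_def by (intro PM_sub PM_smul poly4_trace PM_const)

lemma m_eq: "(X::complex^2^2) = Y \<longleftrightarrow> (\<forall>i j. X $ i $ j = Y $ i $ j)"
  by (simp add: vec_eq_iff)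

lemma mm_smul_l: "smul k X ** (Y::complex^2^2) = smul k (X ** Y)"
  by (simp add: vec_eq_iff matrix_matrix_mult_def smul_def sum_2 algebra_simps)
lemma mm_smul_r: "(X::complex^2^2) ** smul k Y = smul k (X ** Y)"
  by (simp add: vec_eq_iff matrix_matrix_mult_def smul_def sum_2 algebra_simps)
lemma mm_add_r: "((X::complex^2^2) + Y) ** Z = X ** Z + Y ** Z"
  by (simp add: vec_eq_iff matrix_matrix_mult_def sum_2 algebra_simps)
lemma mm_add_l: "(Z::complex^2^2) ** (X + Y) = Z ** X + Z ** Y"
  by (simp add: vec_eq_iff matrix_matrix_mult_def sum_2 algebra_simps)
lemma mm_sub_r: "((X::complex^2^2) - Y) ** Z = X ** Z - Y ** Z"
  by (simp add: vec_eq_iff matrix_matrix_mult_def sum_2 algebra_simps)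
lemma mm_sub_l: "(Z::complex^2^2) ** (X - Y) = Z ** X - Z ** Y"
  by (simp add: vec_eq_iff matrix_matrix_mult_def sum_2 algebra_simps)
lemma mm_0_r: "(0::complex^2^2) ** Z = 0"
  by (simp add: vec_eq_iff matrix_matrix_mult_def sum_2)
lemma mm_0_l: "(Z::complex^2^2) ** 0 = 0"
  by (simp add: vec_eq_iff matrix_matrix_mult_def sum_2)

lemma mm_sum_l: "finite S \<Longrightarrow> (A::complex^2^2) ** (\<Sum>p\<in>S. F p :: complex^2^2) = (\<Sum>p\<in>S. A ** F p)"
  by (induction S rule: finite_induct) (auto simp: mm_0_l mm_add_l)
lemma mm_sum_r: "finite S \<Longrightarrow> (\<Sum>p\<in>S. F p :: complex^2^2) ** (A::complex^2^2) = (\<Sum>p\<in>S. F p ** A)"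
  by (induction S rule: finite_induct) (auto simp: mm_0_r mm_add_r)

lemma inv_facts: assumes "invertible (A::complex^2^2)"
  shows "A ** matrix_inv A = mat 1" "matrix_inv A ** A = mat 1"
proof -
  have "\<exists>A'. A ** A' = mat 1 \<and> A' ** A = mat 1" using assms unfolding invertible_def by blast
  from someI_ex[OF this] show "A ** matrix_inv A = mat 1" "matrix_inv A ** A = mat 1"
    unfolding matrix_inv_def by auto
qed

locale conjctx =
  fixes A B :: "complex^2^2"
  assumes AB: "A ** B = mat 1" and BA: "B ** A = mat 1"
begin

definition cm :: "complex^2^2 \<Rightarrow> complex^2^2" where "cm X = A ** X ** B"

lemma cm_mult: "cm (X ** Y) = cm X ** cm Y"
proof -
  have "cm X ** cm Y = A ** X ** (B ** A) ** Y ** B" unfolding cm_def by (simp add: matrix_mul_assoc)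
  also have "\<dots> = cm (X ** Y)" unfolding cm_def BA by (simp add: matrix_mul_assoc)
  finally show ?thesis by simp
qed

lemma cm_one: "cm (mat 1) = mat 1" unfolding cm_def by (simp add: AB)

lemma cm_smul: "cm (smul k X) = smul k (cm X)" unfolding cm_def by (simp add: mm_smul_l mm_smul_r)

lemma cm_sub: "cm (X - Y) = cm X - cm Y" unfolding cm_def by (simp add: mm_sub_l mm_sub_r)

lemma cm_sum: "finite S \<Longrightarrow> cm (\<Sum>p\<in>S. F p) = (\<Sum>p\<in>S. cm (F p))"
  unfolding cm_def by (simp add: mm_sum_l mm_sum_r)

lemma cm_trace: "trace (cm X) = trace X"
proof -
  have "trace (cm X) = trace (B ** (A ** X))" unfolding cm_def by (rule trace_mul_sym)
  also have "\<dots> = trace X" by (simp add: matrix_mul_assoc BA)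
  finally show ?thesis .
qed

lemma cm_mpow: "cm (mpow X n) = mpow (cm X) n"
  by (induction n) (auto simp: cm_one cm_mult)

lemma cm_adj2: "cm (adj2 X) = adj2 (cm X)"
  unfolding adj2_def by (simp add: cm_sub cm_smul cm_one cm_trace)

end

lemma diag_mult: "diag2 a b ** diag2 c d = diag2 (a*c) (b*d)"
  by (simp add: vec_eq_iff matrix_matrix_mult_def diag2_def sum_2 forall_2)
lemma diag_one: "mat 1 = diag2 1 1"
  by (simp add: vec_eq_iff mat_def diag2_def forall_2)
lemma diag_mpow: "mpow (diag2 a b) n = diag2 (a^n) (b^n)"
  by (induction n) (auto simp: diag_one diag_mult)
lemma diag_trace: "trace (diag2 a b) = a + b"
  by (simp add: trace_def diag2_def sum_2 forall_2)
lemma diag_smul: "smul k (diag2 a b) = diag2 (k*a) (k*b)"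
  by (simp add: vec_eq_iff smul_def diag2_def forall_2)
lemma diag_sub: "diag2 a b - diag2 c d = diag2 (a-c) (b-d)"
  by (simp add: vec_eq_iff diag2_def forall_2)
lemma diag_adj2: "adj2 (diag2 a b) = diag2 b a"
  unfolding adj2_def diag_trace diag_one diag_smul diag_sub by simp
lemma diag_sum: "finite S \<Longrightarrow> (\<Sum>p\<in>S. diag2 (f p) (g p)) = diag2 (\<Sum>p\<in>S. f p) (\<Sum>p\<in>S. g p)"
  by (induction S rule: finite_induct) (auto simp: m_eq diag2_def)

theorem proposition2p4:
  fixes \<Psi> :: "complex \<Rightarrow> complex \<Rightarrow> complex"
  assumes "poly2 \<Psi>"
  shows "\<exists>\<Phi>. poly_matrix_map \<Phi> \<and> compatible_conj \<Phi> \<and>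
           (\<forall>l1 l2. \<Phi> (diag2 l1 l2) = diag2 (\<Psi> l1 l2) (\<Psi> l2 l1))"
proof -
  obtain S c where S: "finite S" "\<And>x y. \<Psi> x y = (\<Sum>(i, j)\<in>S. c (i, j) * x ^ i * y ^ j)"
    using assms unfolding poly2_def by blast
  define \<Phi> where "\<Phi> M = (\<Sum>p\<in>S. smul (c p) (mpow M (fst p) ** mpow (adj2 M) (snd p)))" for M
  have "PM (\<lambda>a b d e. \<Phi> (mk a b d e))"
    unfolding \<Phi>_def
    by (intro PM_sum S PM_smul poly4_const PM_mult PM_mpow PM_adj2 PM_mk)
  then have 1: "poly_matrix_map \<Phi>"
    unfolding PM_def mk_def poly_matrix_map_def by simp
  have 2: "compatible_conj \<Phi>"
    unfolding compatible_conj_def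
  proof (intro allI impI)
    fix A M :: "complex^2^2" assume "invertible A"
    interpret conjctx A "matrix_inv A" using inv_facts[OF \<open>invertible A\<close>] by unfold_locales
    show "A ** \<Phi> M ** matrix_inv A = \<Phi> (A ** M ** matrix_inv A)"
      using cm_sum[OF S(1)] unfolding \<Phi>_def cm_def[symmetric]
      by (simp add: cm_smul cm_mult cm_mpow cm_adj2)
  qed
  have 3: "\<Phi> (diag2 l1 l2) = diag2 (\<Psi> l1 l2) (\<Psi> l2 l1)" for l1 l2
    unfolding \<Phi>_def S(2) diag_mpow diag_adj2 diag_mult diag_smul
    by (subst diag_sum[OF S(1)]) (simp add: split_def mult_ac)
  show ?thesis using 1 2 3 by blast
qed

end
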